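(* Let $\Theta=\Theta^1\times\cdots\times\Theta^k\subseteq\mathbb{R}^p$ be a Cartesian product of convex sets, let $f:\mathbb{R}^p\to\mathbb{R}$ be continuous, convex and bounded below with a minimizer $\theta^\star$ on $\Theta$, $f^\star\triangleq f(\theta^\star)$, and let $\delta\triangleq 1/k$. Consider the randomized block coordinate scheme: given $\theta_0\in\Theta$, for $n\ge1$ choose a separable majorant function $g_n(\theta)=\sum_{i=1}^kg_n^i(\theta^i)$ in $\mathcal{S}_L(f,\theta_{n-1})$, pick $\hat\imath_n\in\{1,\dots,k\}$ uniformly at random (independently), set $\theta_n^{\hat\imath_n}\in\operatorname{arg\,min}_{\theta^{\hat\imath_n}\in\Theta^{\hat\imath_n}}g_n^{\hat\imath_n}(\theta^{\hat\imath_n})$ and $\theta_n^i=\theta_{n-1}^i$ for $i\ne\hat\imath_n$. (i) Assume there is $R>0$ such that $\|\theta-\theta^\star\|_2\le R$ for all $\theta\in\Theta$ with $f(\theta)\le f(\theta_0)$. Then $(f(\theta_n))_{n\ge0}$ converges almost surely to $f^\star$ and $$\mathbb{E}[f(\theta_n)-f^\star]\le\frac{2LR^2}{2+\delta(n-n_0)}\quad\text{for all }n\ge n_0,$$ where $n_0\triangleq\Big\lceil\log\!\Big(\frac{2(f(\theta_0)-f^\star)}{LR^2}-1\Big)\Big/\log\!\Big(\frac{1}{1-\delta}\Big)\Big\rceil$ if $f(\theta_0)-f^\star>LR^2$ and $n_0\triangleq0$ otherwise. (ii) If $f$ is $\mu$-strongly convex (with no level-set assumption), then $\mathbb{E}[f(\theta_n)-f^\star]\le((1-\delta)+\delta\beta)^n(f(\theta_0)-f^\star)$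 for all $n\ge 1$, where $\beta\triangleq\frac{L}{\mu}$ if $\mu>2L$ and $\beta\triangleq1-\frac{\mu}{4L}$ otherwise.
   Context: First-order surrogates: $g:\mathbb{R}^p\to\mathbb{R}$ belongs to $\mathcal{S}_L(f,\kappa)$ if (a) $g(\theta')\ge f(\theta')$ for all $\theta'\in\operatorname{arg\,min}_{\theta\in\Theta}g(\theta)$, and (b) $h\triangleq g-f$ is differentiable with $L$-Lipschitz gradient, $h(\kappa)=0$, $\nabla h(\kappa)=0$. A majorant function satisfies $g\ge f$ everywhere. The minimizers are assumed to exist. *)

theory Defs
  imports "HOL-Analysis.Analysis" "HOL-Probability.Probability"
begin

definition argmin_on :: "'a set \<Rightarrow> ('a \<Rightarrow> real) \<Rightarrow> 'a set" where
  "argmin_on S g = {x \<in> S. \<forall>y \<in> S. g x \<le> g y}"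

definition first_order_surrogate ::
  "('a::real_inner set) \<Rightarrow> real \<Rightarrow> ('a \<Rightarrow> real) \<Rightarrow> 'a \<Rightarrow> ('a \<Rightarrow> real) \<Rightarrow> bool" where
  "first_order_surrogate Theta L f kappa g \<longleftrightarrow>
     (\<forall>t \<in> argmin_on Theta g. f t \<le> g t) \<and>
     (\<exists>G. (\<forall>x. ((\<lambda>y. g y - f y) has_derivative (\<lambda>v. G x \<bullet> v)) (at x)) \<and>
          (\<forall>x y. norm (G x - G y) \<le> L * norm (x - y)) \<and>
          g kappa - f kappa = 0 \<and> G kappa = 0)"

definition strongly_convex_on :: "real \<Rightarrow> ('a::real_normed_vector \<Rightarrow> real) \<Rightarrow> bool" where
  "strongly_convex_on mu f \<longleftrightarrow>
     (\<forall>x y t. 0 \<le> t \<and> t \<le> 1 \<longrightarrow>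
        f (t *\<^sub>R x + (1 - t) *\<^sub>R y) \<le> t * f x + (1 - t) * f y - mu / 2 * t * (1 - t) * (norm (x - y))\<^sup>2)"

text \<open>Block projection: keep coordinates of block i (blk j = i), zero elsewhere.
  Block i of R^p, i.e. R^{p_i}, is identified with the coordinate subspace of block i.\<close>
definition blockproj :: "('p::finite \<Rightarrow> nat) \<Rightarrow> nat \<Rightarrow> real^'p \<Rightarrow> real^'p" where
  "blockproj blk i x = (\<chi> j. if blk j = i then x $ j else 0)"

definition block_product :: "('p::finite \<Rightarrow> nat) \<Rightarrow> nat \<Rightarrow> (nat \<Rightarrow> (real^'p) set) \<Rightarrow> (real^'p) set" where
  "block_product blk k Th = {x. \<forall>i<k. blockproj blk i x \<in> Th i}"

text \<open>Sample space of the index sequence: i.i.d. uniform on {0..<k}; coordinate 0 unused.\<close>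
definition index_space :: "nat \<Rightarrow> (nat \<Rightarrow> nat) measure" where
  "index_space k = PiM UNIV (\<lambda>_. measure_pmf (pmf_of_set {..<k}))"

text \<open>n_0 of part (i). For k = 1 (delta = 1) log(1/(1-delta)) = +infinity and
  we take the limiting value 1 of the ceiling.\<close>
definition n0_bound :: "nat \<Rightarrow> real \<Rightarrow> real \<Rightarrow> real \<Rightarrow> nat" where
  "n0_bound k L R gap =
     (if gap > L * R\<^sup>2 then
        (if k = 1 then 1
         else nat \<lceil>ln (2 * gap / (L * R\<^sup>2) - 1) / ln (1 / (1 - 1 / real k))\<rceil>)
      else 0)"

end

theory Submission
  imports Defs
begin


lemma PiE_dflt_undefined: "PiE_dflt A undefined B = PiE A B"
  by (auto simp: PiE_dflt_def PiE_def extensional_def)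

lemma Pi_pmf_PiM:
  assumes fin: "finite J"
  shows "distr (measure_pmf (Pi_pmf J undefined (\<lambda>_. p))) (PiM J (\<lambda>_. measure_pmf p)) (\<lambda>x. restrict x J)
        = PiM J (\<lambda>_. measure_pmf p)"
proof (rule product_sigma_finite.PiM_eqI, goal_cases)
  case 1
  interpret product_prob_space "\<lambda>_. measure_pmf p" J
    by (intro product_prob_spaceI measure_pmf.prob_space_axioms)
  show ?case by unfold_locales
next
  case 2 show ?case by (rule fin)
next
  case 3 show ?case by simp
next
  case (4 A)
  have "Pi\<^sub>E J A \<in> sets (PiM J (\<lambda>_. measure_pmf p))"
    using 4 by (intro sets_PiM_I_finite fin) auto
  hence "emeasure (distr (measure_pmf (Pi_pmf J undefined (\<lambda>_. p))) (PiM J (\<lambda>_. measure_pmf p))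
          (\<lambda>x. restrict x J)) (Pi\<^sub>E J A) =
         emeasure (measure_pmf (Pi_pmf J undefined (\<lambda>_. p))) ((\<lambda>x. restrict x J) -` Pi\<^sub>E J A)"
    using 4 by (subst emeasure_distr) (auto simp: space_PiM)
  also have "\<dots> = emeasure (measure_pmf (Pi_pmf J undefined (\<lambda>_. p))) (PiE_dflt J undefined A)"
    by (intro emeasure_eq_AE AE_pmfI) (auto simp: PiE_dflt_def set_Pi_pmf fin)
  also have "\<dots> = (\<Prod>i\<in>J. emeasure (measure_pmf p) (A i))"
    by (simp add: measure_pmf.emeasure_eq_measure measure_Pi_pmf_PiE_dflt fin prod_ennreal)
  finally show ?case .
qed

lemma meas_fin_dep:
  fixes F :: "(nat \<Rightarrow> nat) \<Rightarrow> real"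
  assumes fin: "finite J"
  shows "F \<in> borel_measurable (PiM J (\<lambda>_. measure_pmf p))"
proof -
  have cnt: "countable (PiE J (\<lambda>_. UNIV::nat set))"
    by (intro countable_PiE fin) auto
  have "(\<lambda>x. x) \<in> measurable (PiM J (\<lambda>_. measure_pmf p)) (count_space (PiE J (\<lambda>_. UNIV)))"
  proof (subst measurable_count_space_eq_countable[OF cnt], intro conjI ballI)
    show "(\<lambda>x. x) \<in> space (Pi\<^sub>M J (\<lambda>_. measure_pmf p)) \<rightarrow> (\<Pi>\<^sub>E i\<in>J. UNIV)"
      by (auto simp: space_PiM)
    fix a assume a: "a \<in> (\<Pi>\<^sub>E i\<in>J. UNIV::nat set)"
    have "(\<lambda>x. x) -` {a} \<inter> space (Pi\<^sub>M J (\<lambda>_. measure_pmf p)) = PiE J (\<lambda>j. {a j})"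
    proof (intro set_eqI iffI)
      fix x assume x: "x \<in> PiE J (\<lambda>j. {a j})"
      have "x = a"
      proof (rule ext)
        fix i show "x i = a i"
        proof (cases "i \<in> J")
          case True then show ?thesis using x by (metis PiE_E singletonD)
        next
          case False then show ?thesis using x a by (metis PiE_arb)
        qed
      qed
      then show "x \<in> (\<lambda>x. x) -` {a} \<inter> space (Pi\<^sub>M J (\<lambda>_. measure_pmf p))"
        using a by (auto simp: space_PiM)
    qed (use a in \<open>auto simp: space_PiM\<close>)
    also have "\<dots> \<in> sets (Pi\<^sub>M J (\<lambda>_. measure_pmf p))"
      by (intro sets_PiM_I_finite fin) auto
    finally show "(\<lambda>x. x) -` {a} \<inter> space (Pi\<^sub>M J (\<lambda>_. measure_pmf p)) \<in> sets (Pi\<^sub>M J (\<lambda>_. measure_pmf p))" .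
  qed
  moreover have "F \<in> borel_measurable (count_space (PiE J (\<lambda>_. UNIV)))" by simp
  ultimately have "F \<circ> (\<lambda>x. x) \<in> borel_measurable (PiM J (\<lambda>_. measure_pmf p))"
    by (rule measurable_comp)
  then show ?thesis by (simp add: o_def)
qed

lemma index_space_integral:
  fixes F :: "(nat \<Rightarrow> nat) \<Rightarrow> real"
  assumes k: "k \<ge> 1" and fin: "finite J"
    and dep: "\<And>\<omega> \<omega>'. (\<forall>j\<in>J. \<omega> j = \<omega>' j) \<Longrightarrow> F \<omega> = F \<omega>'"
  shows "F \<in> borel_measurable (index_space k)"
    and "integral\<^sup>L (index_space k) F = (\<Sum>\<omega>\<in>PiE J (\<lambda>_. {..<k}). F \<omega>) / real k ^ card J"
proof -
  let ?p = "pmf_of_set {..<k::nat}"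
  let ?M = "\<lambda>_::nat. measure_pmf ?p"
  interpret product_prob_space ?M UNIV
    by (intro product_prob_spaceI measure_pmf.prob_space_axioms)
  have FR: "F (restrict x J) = F x" for x by (rule dep) auto
  have "0 \<in> {..<k::nat}" using k by simp
  then have ne0: "{..<k::nat} \<noteq> {}" by blast
  have mR: "(\<lambda>x. restrict x J) \<in> measurable (PiM UNIV ?M) (PiM J ?M)"
    by (rule measurable_restrict_subset) auto
  have mF: "F \<in> borel_measurable (PiM J ?M)" by (rule meas_fin_dep[OF fin])
  show "F \<in> borel_measurable (index_space k)"
    unfolding index_space_def
    using measurable_comp[OF mR mF] FR by (simp add: o_def)
  have "integral\<^sup>L (index_space k) F = integral\<^sup>L (PiM UNIV ?M) (\<lambda>x. F (restrict x J))"
    by (simp add: index_space_def FR)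
  also have "\<dots> = integral\<^sup>L (distr (PiM UNIV ?M) (PiM J ?M) (\<lambda>x. restrict x J)) F"
    by (rule integral_distr[OF mR mF, symmetric])
  also have "distr (PiM UNIV ?M) (PiM J ?M) (\<lambda>x. restrict x J) = PiM J ?M"
    by (rule distr_PiM_restrict_finite[OF fin]) auto
  also have "\<dots> = distr (measure_pmf (Pi_pmf J undefined (\<lambda>_. ?p))) (PiM J ?M) (\<lambda>x. restrict x J)"
    by (rule Pi_pmf_PiM[OF fin, symmetric])
  also have "integral\<^sup>L \<dots> F = integral\<^sup>L (measure_pmf (Pi_pmf J undefined (\<lambda>_. ?p))) (\<lambda>x. F (restrict x J))"
    by (rule integral_distr) (auto intro: mF simp: space_PiM)
  also have "Pi_pmf J undefined (\<lambda>_. ?p) = pmf_of_set (PiE J (\<lambda>_. {..<k}))"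
  proof -
    have "Pi_pmf J undefined (\<lambda>_. ?p) = pmf_of_set (PiE_dflt J undefined (\<lambda>_. {..<k}))"
      by (rule Pi_pmf_of_set[OF fin]) (use ne0 in auto)
    then show ?thesis by (simp only: PiE_dflt_undefined)
  qed
  also have "integral\<^sup>L (measure_pmf (pmf_of_set (PiE J (\<lambda>_. {..<k})))) (\<lambda>x. F (restrict x J))
      = (\<Sum>\<omega>\<in>PiE J (\<lambda>_. {..<k}). F \<omega>) / card (PiE J (\<lambda>_. {..<k::nat}))"
  proof -
    have "0 \<in> {..<k::nat}" using k by simp
    then have ne: "{..<k::nat} \<noteq> {}" by blast
    have "PiE J (\<lambda>_. {..<k::nat}) \<noteq> {}" using ne by (simp add: PiE_eq_empty_iff)
    moreover have "finite (PiE J (\<lambda>_. {..<k::nat}))" using fin by (simp add: finite_PiE)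
    ultimately have "integral\<^sup>L (measure_pmf (pmf_of_set (PiE J (\<lambda>_. {..<k})))) (\<lambda>x. F (restrict x J))
      = (\<Sum>\<omega>\<in>PiE J (\<lambda>_. {..<k}). F (restrict \<omega> J)) / card (PiE J (\<lambda>_. {..<k::nat}))"
      by (rule integral_pmf_of_set)
    then show ?thesis by (simp only: FR)
  qed
  also have "card (PiE J (\<lambda>_. {..<k::nat})) = k ^ card J"
    using fin by (simp add: card_PiE)
  finally show "integral\<^sup>L (index_space k) F = (\<Sum>\<omega>\<in>PiE J (\<lambda>_. {..<k}). F \<omega>) / real k ^ card J"
    by (simp only: of_nat_power)
qed



lemma surr_bound:
  fixes f g :: "'a::real_inner \<Rightarrow> real"
  assumes S: "first_order_surrogate Th L f \<kappa> g" and L: "L \<ge> 0"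
  shows "g \<kappa> = f \<kappa>" and "g z \<le> f z + L / 2 * (norm (z - \<kappa>))\<^sup>2"
proof -
  obtain G where G: "\<And>x. ((\<lambda>y. g y - f y) has_derivative (\<lambda>v. G x \<bullet> v)) (at x)"
    and Lip: "\<And>x y. norm (G x - G y) \<le> L * norm (x - y)"
    and h0: "g \<kappa> - f \<kappa> = 0" and G0: "G \<kappa> = 0"
    using S unfolding first_order_surrogate_def by blast
  show "g \<kappa> = f \<kappa>" using h0 by simp
  define d where "d = z - \<kappa>"
  define h where "h = (\<lambda>y. g y - f y)"
  define \<phi> where "\<phi> = (\<lambda>t::real. h (\<kappa> + t *\<^sub>R d) - L / 2 * t\<^sup>2 * (norm d)\<^sup>2)"
  have D: "(\<phi> has_real_derivative (G (\<kappa> + t *\<^sub>R d) \<bullet> d - L * t * (norm d)\<^sup>2)) (at t)" for t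
  proof -
    have d1: "((\<lambda>t. \<kappa> + t *\<^sub>R d) has_derivative (\<lambda>s. s *\<^sub>R d)) (at t)"
      by (auto intro!: derivative_eq_intros)
    have d2: "((\<lambda>t. h (\<kappa> + t *\<^sub>R d)) has_derivative (\<lambda>s. G (\<kappa> + t *\<^sub>R d) \<bullet> (s *\<^sub>R d))) (at t)"
      using has_derivative_compose[OF d1 G[of "\<kappa> + t *\<^sub>R d", folded h_def]] by simp
    have "(\<lambda>s. G (\<kappa> + t *\<^sub>R d) \<bullet> (s *\<^sub>R d)) = (\<lambda>s. (G (\<kappa> + t *\<^sub>R d) \<bullet> d) * s)"
      by (auto simp: fun_eq_iff)
    with d2 have d3: "((\<lambda>t. h (\<kappa> + t *\<^sub>R d)) has_real_derivative (G (\<kappa> + t *\<^sub>R d) \<bullet> d)) (at t)"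
      by (simp add: has_field_derivative_def)
    have d4: "((\<lambda>t::real. L / 2 * t\<^sup>2 * (norm d)\<^sup>2) has_real_derivative (L * t * (norm d)\<^sup>2)) (at t)"
      by (auto intro!: derivative_eq_intros)
    show ?thesis unfolding \<phi>_def by (rule DERIV_diff[OF d3 d4])
  qed
  have "\<phi> 0 \<ge> \<phi> 1"
  proof (rule DERIV_nonpos_imp_nonincreasing[of 0 1])
    fix t :: real assume t: "0 \<le> t" "t \<le> 1"
    have "G (\<kappa> + t *\<^sub>R d) \<bullet> d = (G (\<kappa> + t *\<^sub>R d) - G \<kappa>) \<bullet> d" using G0 by simp
    also have "\<dots> \<le> norm (G (\<kappa> + t *\<^sub>R d) - G \<kappa>) * norm d" by (rule norm_cauchy_schwarz)
    also have "\<dots> \<le> L * norm ((\<kappa> + t *\<^sub>R d) - \<kappa>) * norm d"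
      by (rule mult_right_mono[OF Lip]) simp
    also have "\<dots> = L * t * (norm d)\<^sup>2" using t by (simp add: power2_eq_square)
    finally have "G (\<kappa> + t *\<^sub>R d) \<bullet> d - L * t * (norm d)\<^sup>2 \<le> 0" by simp
    then show "\<exists>y. (\<phi> has_real_derivative y) (at t) \<and> y \<le> 0"
      using D[of t] by blast
  qed simp
  then show "g z \<le> f z + L / 2 * (norm (z - \<kappa>))\<^sup>2"
    using h0 by (simp add: \<phi>_def h_def d_def)
qed

lemma strong_gap:
  fixes f :: "'a::real_normed_vector \<Rightarrow> real"
  assumes sc: "strongly_convex_on mu f" and cv: "convex S" and ts: "ts \<in> S"
    and min: "\<forall>t\<in>S. f ts \<le> f t" and th: "\<theta> \<in> S"
  shows "mu / 2 * (norm (\<theta> - ts))\<^sup>2 \<le> f \<theta> - f ts"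
proof (rule ccontr)
  define D where "D = f \<theta> - f ts"
  define Q where "Q = mu / 2 * (norm (\<theta> - ts))\<^sup>2"
  assume "\<not> mu / 2 * (norm (\<theta> - ts))\<^sup>2 \<le> f \<theta> - f ts"
  hence QD: "D < Q" by (simp add: Q_def D_def)
  have D0: "0 \<le> D" using min th by (simp add: D_def)
  define t where "t = (Q - D) / (2 * Q)"
  have Q0: "Q > 0" using QD D0 by simp
  have t0: "0 < t" "t \<le> 1" using QD D0 Q0 by (auto simp: t_def field_simps)
  have inS: "t *\<^sub>R \<theta> + (1 - t) *\<^sub>R ts \<in> S" using cv th ts t0 by (simp add: convex_def)
  have "f ts \<le> f (t *\<^sub>R \<theta> + (1 - t) *\<^sub>R ts)" using min inS by blast
  also have "\<dots> \<le> t * f \<theta> + (1 - t) * f ts - mu / 2 * t * (1 - t) * (norm (\<theta> - ts))\<^sup>2"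
    using sc t0 unfolding strongly_convex_on_def by auto
  finally have "t * (1 - t) * Q \<le> t * D" by (simp add: Q_def D_def algebra_simps)
  hence "(1 - t) * Q \<le> D" using t0 by (simp add: mult.assoc)
  moreover have "(1 - t) * Q = (Q + D) / 2" using Q0 by (simp add: t_def field_simps)
  ultimately show False using QD by simp
qed

lemma blockproj_lin: "blockproj blk i (a *\<^sub>R x + b *\<^sub>R y) = a *\<^sub>R blockproj blk i x + b *\<^sub>R blockproj blk i y"
  by (simp add: blockproj_def vec_eq_iff)

lemma convex_block_product:
  assumes "\<forall>i<k. convex (Th i)"
  shows "convex (block_product blk k Th)"
  unfolding convex_def block_product_def
  using assms by (auto simp: blockproj_lin convex_def)



lemma geom_rate:
  fixes e :: "nat \<Rightarrow> real"
  assumes rec: "\<forall>n. e (Suc n) \<le> \<rho> * e n" and r: "\<rho> \<ge> 0"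
  shows "e n \<le> \<rho> ^ n * e 0"
proof (induction n)
  case (Suc n)
  have "e (Suc n) \<le> \<rho> * e n" using rec by blast
  also have "\<dots> \<le> \<rho> * (\<rho> ^ n * e 0)" using Suc r by (rule mult_left_mono)
  finally show ?case by (simp add: mult.assoc)
qed simp

lemma phase3_step:
  fixes c \<delta> e b e' j :: real
  assumes c: "c > 0" and d: "0 < \<delta>" "\<delta> \<le> 1" and j: "j \<ge> 0"
    and b: "b = 2 * c / (2 + \<delta> * j)" and e: "0 \<le> e" "e \<le> b"
    and e': "e' \<le> e - \<delta> * (e / c) * e + \<delta> * (e / c)^2 * c / 2"
  shows "e' \<le> 2 * c / (2 + \<delta> * (j + 1))"
proof -
  define D where "D = 2 + \<delta> * j"
  have D: "D \<ge> 2" using d j by (simp add: D_def)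
  have "2 * c / D \<le> 2 * c / 2" using D c by (intro divide_left_mono) auto
  hence bc: "b \<le> c" by (simp add: b D_def)
  have "e' \<le> e - \<delta> * e^2 / (2 * c)" using e' c by (simp add: power2_eq_square field_simps)
  also have "\<dots> \<le> b - \<delta> * b^2 / (2 * c)"
  proof -
    have "(b - e) * (1 - \<delta> * (b + e) / (2 * c)) \<ge> 0"
    proof (rule mult_nonneg_nonneg)
      show "0 \<le> b - e" using e by simp
      have "\<delta> * (b + e) \<le> 1 * (2 * c)" using d e bc by (intro mult_mono) auto
      then show "0 \<le> 1 - \<delta> * (b + e) / (2 * c)" using c by (simp add: field_simps)
    qed
    moreover have "b - \<delta> * b^2 / (2 * c) - (e - \<delta> * e^2 / (2 * c)) = (b - e) * (1 - \<delta> * (b + e) / (2 * c))"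
      using c by (simp add: field_simps power2_eq_square)
    ultimately show ?thesis by linarith
  qed
  also have "\<dots> = 2 * c * (D - \<delta>) / D^2"
  proof -
    have bD: "b = 2 * c / D" using b by (simp add: D_def)
    show ?thesis unfolding bD using D c by (simp add: field_simps power2_eq_square)
  qed
  also have "\<dots> \<le> 2 * c / (D + \<delta>)"
  proof -
    have le: "(D - \<delta>) * (D + \<delta>) \<le> D^2" by (simp add: power2_eq_square algebra_simps)
    have nz: "D + \<delta> \<noteq> 0" using D d by auto
    have "2*c*(D-\<delta>)/D^2 = (2*c*(D-\<delta>))*(D+\<delta>)/(D^2*(D+\<delta>))"
      by (rule nonzero_mult_divide_mult_cancel_right[symmetric]) (rule nz)
    also have "\<dots> \<le> (2*c*D^2)/(D^2*(D+\<delta>))"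
    proof (rule divide_right_mono)
      have "(2*c*(D-\<delta>))*(D+\<delta>) = 2*c*((D-\<delta>)*(D+\<delta>))" by (simp only: mult.assoc)
      also have "\<dots> \<le> 2*c*D^2" using le c by (intro mult_left_mono) auto
      finally show "(2*c*(D-\<delta>))*(D+\<delta>) \<le> 2*c*D^2" .
      show "0 \<le> D^2*(D+\<delta>)" using D d by simp
    qed
    also have "\<dots> = 2*c/(D+\<delta>)" using D by simp
    finally show ?thesis .
  qed
  also have "D + \<delta> = 2 + \<delta> * (j + 1)" by (simp add: D_def algebra_simps)
  finally show ?thesis .
qed

lemma rate_i:
  fixes e :: "nat \<Rightarrow> real"
  assumes L: "L > 0" and R: "R > 0" and k: "k \<ge> 1" and e0: "e 0 = gap" and nn: "\<forall>n. 0 \<le> e n"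
    and rec: "\<forall>n \<alpha>. 0 \<le> \<alpha> \<longrightarrow> \<alpha> \<le> 1 \<longrightarrow>
       e (Suc n) \<le> e n - (1 / real k) * \<alpha> * e n + (1 / real k) * \<alpha>^2 * (L * R^2) / 2"
  shows "\<forall>n \<ge> n0_bound k L R gap. e n \<le> 2 * L * R^2 / (2 + (1 / real k) * (real n - real (n0_bound k L R gap)))"
proof -
  define c where "c = L * R^2"
  define \<delta> where "\<delta> = 1 / real k"
  define n0 where "n0 = n0_bound k L R gap"
  have c: "c > 0" using L R by (simp add: c_def)
  have d: "0 < \<delta>" "\<delta> \<le> 1" using k by (auto simp: \<delta>_def)
  have rec': "e (Suc n) \<le> e n - \<delta> * \<alpha> * e n + \<delta> * \<alpha>^2 * c / 2" if "0 \<le> \<alpha>" "\<alpha> \<le> 1" for n \<alpha>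
    using rec that by (simp add: c_def \<delta>_def)
  have ph1: "e n - c / 2 \<le> (1 - \<delta>) ^ n * (gap - c / 2)" for n
  proof (induction n)
    case 0 then show ?case by (simp add: e0)
  next
    case (Suc n)
    have "(1 - \<delta>) * (e n - c/2) = e n - \<delta> * e n + \<delta> * c/2 - c/2" by (simp add: field_simps)
    hence "e (Suc n) - c / 2 \<le> (1 - \<delta>) * (e n - c / 2)"
      using rec'[of 1 n] by simp
    also have "\<dots> \<le> (1 - \<delta>) * ((1 - \<delta>) ^ n * (gap - c / 2))"
      using Suc d by (intro mult_left_mono) auto
    finally show ?case by (simp add: mult.assoc)
  qed
  have en0: "e n0 \<le> c"
  proof (cases "gap > c")
    case False
    then have "n0 = 0" by (simp add: n0_def n0_bound_def c_def)
    then show ?thesis using False e0 by simp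
  next
    case True
    show ?thesis
    proof (cases "k = 1")
      case True
      with \<open>gap > c\<close> have "n0 = 1" by (simp add: n0_def n0_bound_def c_def)
      moreover have "\<delta> = 1" using True by (simp add: \<delta>_def)
      ultimately show ?thesis using ph1[of 1] c by simp
    next
      case False
      define A where "A = 2 * gap / c - 1"
      define B where "B = 1 / (1 - \<delta>)"
      have k2: "real k > 1" using False k by simp
      have d1: "\<delta> < 1" using k2 by (simp add: \<delta>_def)
      have A1: "A > 1" using True c by (simp add: A_def field_simps)
      have B1: "B > 1" using d d1 by (simp add: B_def field_simps)
      have n0eq: "n0 = nat \<lceil>ln A / ln B\<rceil>"
        using True False by (simp add: n0_def n0_bound_def c_def A_def B_def \<delta>_def)
      have "ln A / ln B \<le> real n0" unfolding n0eq by (rule real_nat_ceiling_ge)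
      hence "ln A \<le> real n0 * ln B" using B1 by (simp add: field_simps)
      also have "\<dots> = ln (B ^ n0)" using B1 by (simp add: ln_realpow)
      finally have "A \<le> B ^ n0" using A1 B1 by simp
      hence "(1 - \<delta>) ^ n0 \<le> 1 / A" using A1 B1 d1
        by (simp add: B_def power_one_over field_simps)
      hence "(1 - \<delta>) ^ n0 * (gap - c / 2) \<le> (1 / A) * (gap - c / 2)"
        using True c by (intro mult_right_mono) auto
      also have "(1 / A) * (gap - c / 2) = c / 2" using A1 c by (simp add: A_def field_simps)
      finally show ?thesis using ph1[of n0] by simp
    qed
  qed
  have ph3: "e (n0 + j) \<le> 2 * c / (2 + \<delta> * real j)" for j
  proof (induction j)
    case 0 then show ?case using en0 by simp
  next
    case (Suc j)
    define b where "b = 2 * c / (2 + \<delta> * real j)"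
    have "0 \<le> \<delta> * real j" using d by simp
    hence "0 < 2 + \<delta> * real j" "2 \<le> 2 + \<delta> * real j" by auto
    hence "2 * c / (2 + \<delta> * real j) \<le> 2 * c / 2" using c by (intro divide_left_mono) auto
    hence bc: "b \<le> c" by (simp add: b_def)
    have e: "0 \<le> e (n0 + j)" "e (n0 + j) \<le> b" using nn Suc by (auto simp: b_def)
    have "e (Suc (n0 + j)) \<le> e (n0 + j) - \<delta> * (e (n0 + j) / c) * e (n0 + j) + \<delta> * (e (n0 + j) / c)^2 * c / 2"
      using e bc c by (intro rec') auto
    then have "e (Suc (n0 + j)) \<le> 2 * c / (2 + \<delta> * (real j + 1))"
      by (intro phase3_step[OF c d _ b_def e]) simp_all
    then show ?case by (simp add: add.commute)
  qed
  show ?thesis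
  proof (intro allI impI)
    fix n assume "n0_bound k L R gap \<le> n"
    then obtain j where "n = n0 + j" by (auto simp: n0_def dest: le_Suc_ex)
    then show "e n \<le> 2 * L * R^2 / (2 + (1 / real k) * (real n - real (n0_bound k L R gap)))"
      using ph3[of j] by (simp add: c_def \<delta>_def n0_def)
  qed
qed



lemma prob_space_index: "k \<ge> 1 \<Longrightarrow> prob_space (index_space k)"
proof -
  assume k: "k \<ge> 1"
  interpret product_prob_space "\<lambda>_::nat. measure_pmf (pmf_of_set {..<k::nat})" UNIV
    by (intro product_prob_spaceI measure_pmf.prob_space_axioms)
  show ?thesis unfolding index_space_def by unfold_locales
qed

lemma space_index: "space (index_space k) = UNIV"
  by (auto simp: index_space_def space_PiM PiE_def extensional_def)

lemma index_space_set:
  assumes k: "k \<ge> 1" and fin: "finite J"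
    and dep: "\<And>w w'. (\<forall>j\<in>J. w j = w' j) \<Longrightarrow> (w \<in> S \<longleftrightarrow> w' \<in> S)"
  shows "S \<in> sets (index_space k)"
    and "measure (index_space k) S = (\<Sum>w\<in>PiE J (\<lambda>_. {..<k}). indicator S w) / real k ^ card J"
proof -
  have dep': "(indicator S w :: real) = indicator S w'" if "\<forall>j\<in>J. w j = w' j" for w w'
    using dep[OF that] by (simp add: indicator_def)
  have "(indicator S :: _ \<Rightarrow> real) \<in> borel_measurable (index_space k)"
    by (rule index_space_integral(1)[OF k fin dep'])
  then show S: "S \<in> sets (index_space k)"
    by (simp add: borel_measurable_indicator_iff space_index)
  have "measure (index_space k) S = integral\<^sup>L (index_space k) (indicator S :: _ \<Rightarrow> real)"
    by (simp add: space_index)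
  also have "\<dots> = (\<Sum>w\<in>PiE J (\<lambda>_. {..<k}). indicator S w) / real k ^ card J"
    by (rule index_space_integral(2)[OF k fin dep'])
  finally show "measure (index_space k) S = (\<Sum>w\<in>PiE J (\<lambda>_. {..<k}). indicator S w) / real k ^ card J" .
qed


theorem proposition3p2:
  fixes k :: nat and blk :: "'p::finite \<Rightarrow> nat" and Th :: "nat \<Rightarrow> (real^'p) set"
    and f :: "real^'p \<Rightarrow> real" and ts :: "real^'p" and L :: real
    and theta :: "nat \<Rightarrow> (nat \<Rightarrow> nat) \<Rightarrow> real^'p"
    and gb :: "nat \<Rightarrow> (nat \<Rightarrow> nat) \<Rightarrow> nat \<Rightarrow> real^'p \<Rightarrow> real"
  assumes k_pos: "k \<ge> 1"
    and blk_range: "\<forall>j. blk j < k"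
    and blk_nonempty: "\<forall>i<k. \<exists>j. blk j = i"
    and Th_block: "\<forall>i<k. Th i \<subseteq> {x. \<forall>j. blk j \<noteq> i \<longrightarrow> x $ j = 0}"
    and Th_convex: "\<forall>i<k. convex (Th i)"
    and f_cont: "continuous_on UNIV f"
    and f_convex: "convex_on UNIV f"
    and f_bdd: "bdd_below (range f)"
    and ts_in: "ts \<in> block_product blk k Th"
    and ts_min: "\<forall>t \<in> block_product blk k Th. f ts \<le> f t"
    and L_pos: "L > 0"
    and init: "\<forall>\<omega>. theta 0 \<omega> \<in> block_product blk k Th \<and> theta 0 \<omega> = theta 0 (\<lambda>_. 0)"
    and g_adapted: "\<forall>n\<ge>1. \<forall>\<omega> \<omega>'. (\<forall>j\<in>{1..<n}. \<omega> j = \<omega>' j) \<longrightarrow> gb n \<omega> = gb n \<omega>'"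
    and theta_adapted: "\<forall>n. \<forall>\<omega> \<omega>'. (\<forall>j\<in>{1..n}. \<omega> j = \<omega>' j) \<longrightarrow> theta n \<omega> = theta n \<omega>'"
    and g_majorant: "\<forall>n\<ge>1. \<forall>\<omega>. (\<forall>j\<in>{1..<n}. \<omega> j < k) \<longrightarrow>
        (\<forall>x. f x \<le> (\<Sum>i<k. gb n \<omega> i (blockproj blk i x)))"
    and g_surrogate: "\<forall>n\<ge>1. \<forall>\<omega>. (\<forall>j\<in>{1..<n}. \<omega> j < k) \<longrightarrow>
        first_order_surrogate (block_product blk k Th) L f (theta (n - 1) \<omega>)
          (\<lambda>x. \<Sum>i<k. gb n \<omega> i (blockproj blk i x))"
    and update: "\<forall>n\<ge>1. \<forall>\<omega>. (\<forall>j\<in>{1..n}. \<omega> j < k) \<longrightarrow>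
        blockproj blk (\<omega> n) (theta n \<omega>) \<in> argmin_on (Th (\<omega> n)) (gb n \<omega> (\<omega> n)) \<and>
        (\<forall>i<k. i \<noteq> \<omega> n \<longrightarrow> blockproj blk i (theta n \<omega>) = blockproj blk i (theta (n - 1) \<omega>))"
  shows
    "(\<forall>R>0. (\<forall>t \<in> block_product blk k Th. f t \<le> f (theta 0 (\<lambda>_. 0)) \<longrightarrow> norm (t - ts) \<le> R) \<longrightarrow>
        ((AE \<omega> in index_space k. (\<lambda>n. f (theta n \<omega>)) \<longlonglongrightarrow> f ts) \<and>
         (\<forall>n \<ge> n0_bound k L R (f (theta 0 (\<lambda>_. 0)) - f ts).
            (\<integral>\<omega>. f (theta n \<omega>) - f ts \<partial>index_space k)
              \<le> 2 * L * R\<^sup>2 / (2 + (1 / real k) * (real n - real (n0_bound k L R (f (theta 0 (\<lambda>_. 0)) - f ts)))))))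
     \<and>
     (\<forall>mu>0. strongly_convex_on mu f \<longrightarrow>
        (\<forall>n\<ge>1. (\<integral>\<omega>. f (theta n \<omega>) - f ts \<partial>index_space k)
           \<le> ((1 - 1 / real k) + (1 / real k) * (if mu > 2 * L then L / mu else 1 - mu / (4 * L))) ^ n
              * (f (theta 0 (\<lambda>_. 0)) - f ts)))"
  proof -
  define Theta where "Theta = block_product blk k Th"
  define gg where "gg = (\<lambda>n w x. \<Sum>i<k. gb n w i (blockproj blk i x))"
  define good where "good = (\<lambda>n (w::nat\<Rightarrow>nat). \<forall>j\<in>{1..n}. w j < k)"
  define th0 where "th0 = theta 0 (\<lambda>_. 0)"
  define P where "P = (\<lambda>m::nat. PiE {1..m} (\<lambda>_. {..<k}))"
  define avg where "avg = (\<lambda>(m::nat) (X :: (nat \<Rightarrow> nat) \<Rightarrow> real). (\<Sum>w\<in>P m. X w) / real k ^ m)"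
  define e where "e = (\<lambda>n. avg n (\<lambda>w. f (theta n w) - f ts))"
  have kpos: "real k > 0" using k_pos by simp
  have cvx: "convex Theta" unfolding Theta_def by (rule convex_block_product[OF Th_convex])
  have ts_T: "ts \<in> Theta" using ts_in by (simp add: Theta_def)
  have th0_T: "th0 \<in> Theta" using init by (simp add: Theta_def th0_def)
  have th0_eq: "theta 0 w = th0" for w using init by (simp add: th0_def)
  have ts_le: "f ts \<le> f t" if "t \<in> Theta" for t using ts_min that by (simp add: Theta_def)
  have good_lt: "\<forall>j\<in>{1..<Suc m}. w j < k" if "good m w" for m w
    using that by (auto simp: good_def)
  have surrI: "first_order_surrogate Theta L f (theta m w) (gg (Suc m) w)" if "good m w" for m w
    using g_surrogate[rule_format, of "Suc m" w] good_lt[OF that] by (simp add: Theta_def gg_def)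
  have surr_eq: "gg (Suc m) w (theta m w) = f (theta m w)" if "good m w" for m w
    using surr_bound(1)[OF surrI[OF that]] L_pos by simp
  have surr_le: "gg (Suc m) w z \<le> f z + L / 2 * (norm (z - theta m w))\<^sup>2" if "good m w" for m w z
    using surr_bound(2)[OF surrI[OF that]] L_pos by simp
  have maj: "f x \<le> gg (Suc m) w x" if "good m w" for m w x
    using g_majorant[rule_format, of "Suc m" w] good_lt[OF that] by (simp add: gg_def)
  have step: "theta (Suc m) w \<in> Theta \<and> f (theta (Suc m) w) \<le> gg (Suc m) w (theta m w)
      - gb (Suc m) w (w (Suc m)) (blockproj blk (w (Suc m)) (theta m w))
      + gb (Suc m) w (w (Suc m)) (blockproj blk (w (Suc m)) z)"
    if gd: "good (Suc m) w" and tT: "theta m w \<in> Theta" and zT: "z \<in> Theta" for m w z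
  proof -
    define i where "i = w (Suc m)"
    define th' where "th' = theta m w"
    define thn where "thn = theta (Suc m) w"
    define gi where "gi = gb (Suc m) w"
    have ik: "i < k" using gd by (auto simp: good_def i_def)
    have gdm: "good m w" using gd by (auto simp: good_def)
    have upd: "blockproj blk i thn \<in> argmin_on (Th i) (gi i)"
      "\<And>j. j < k \<Longrightarrow> j \<noteq> i \<Longrightarrow> blockproj blk j thn = blockproj blk j th'"
      using update[rule_format, of "Suc m" w] gd
      by (auto simp: good_def i_def thn_def th'_def gi_def)
    have zi: "blockproj blk i z \<in> Th i" using zT ik by (auto simp: Theta_def block_product_def)
    have min_i: "gi i (blockproj blk i thn) \<le> gi i (blockproj blk i z)"
      using upd(1) zi by (auto simp: argmin_on_def)
    have thnT: "thn \<in> Theta"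
      unfolding Theta_def block_product_def
    proof (intro CollectI allI impI)
      fix j assume jk: "j < k"
      show "blockproj blk j thn \<in> Th j"
      proof (cases "j = i")
        case True then show ?thesis using upd(1) by (simp add: argmin_on_def)
      next
        case False then show ?thesis using upd(2)[OF jk False] tT jk
          by (simp add: Theta_def block_product_def th'_def)
      qed
    qed
    have "gg (Suc m) w thn = gi i (blockproj blk i thn) + (\<Sum>j\<in>{..<k}-{i}. gi j (blockproj blk j thn))"
      unfolding gg_def gi_def using ik by (subst sum.remove[of _ i]) auto
    also have "(\<Sum>j\<in>{..<k}-{i}. gi j (blockproj blk j thn)) = (\<Sum>j\<in>{..<k}-{i}. gi j (blockproj blk j th'))"
      using upd(2) by (intro sum.cong) auto
    also have "\<dots> = gg (Suc m) w th' - gi i (blockproj blk i th')"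
      unfolding gg_def gi_def using ik by (subst sum.remove[of _ i]) auto
    finally have "gg (Suc m) w thn = gi i (blockproj blk i thn) + (gg (Suc m) w th' - gi i (blockproj blk i th'))" .
    moreover have "f thn \<le> gg (Suc m) w thn" by (rule maj[OF gdm])
    ultimately show ?thesis using min_i thnT
      by (simp add: thn_def th'_def i_def gi_def)
  qed
  have inv: "theta n w \<in> Theta \<and> f (theta n w) \<le> f th0" if "good n w" for n w
    using that
  proof (induction n)
    case 0 then show ?case using th0_T th0_eq by simp
  next
    case (Suc m)
    have gdm: "good m w" using Suc.prems by (auto simp: good_def)
    have IH: "theta m w \<in> Theta \<and> f (theta m w) \<le> f th0" using Suc.IH gdm by blast
    have "theta (Suc m) w \<in> Theta \<and> f (theta (Suc m) w) \<le> gg (Suc m) w (theta m w)"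
      using step[OF Suc.prems conjunct1[OF IH] conjunct1[OF IH]] by simp
    then show ?case using surr_eq[OF gdm] IH by simp
  qed
  have mono: "f (theta (Suc m) w) \<le> f (theta m w)" if "good (Suc m) w" for m w
  proof -
    have gdm: "good m w" using that by (auto simp: good_def)
    have T: "theta m w \<in> Theta" using inv[OF gdm] by blast
    show ?thesis using step[OF that T T] surr_eq[OF gdm] by simp
  qed
  have avg_step: "(\<Sum>i<k. f (theta (Suc m) (w(Suc m := i)))) / real k
      \<le> (1 - 1 / real k) * f (theta m w) + (1 / real k) * (f z + L / 2 * (norm (z - theta m w))\<^sup>2)"
    if gd: "good m w" and zT: "z \<in> Theta" for m w z
  proof -
    define th' where "th' = theta m w"
    define G where "G = gg (Suc m) w th'"
    have tT: "th' \<in> Theta" using inv[OF gd] by (simp add: th'_def)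
    have each: "f (theta (Suc m) (w(Suc m := i))) \<le> G - gb (Suc m) w i (blockproj blk i th')
        + gb (Suc m) w i (blockproj blk i z)" if ik: "i < k" for i
    proof -
      let ?w = "w(Suc m := i)"
      have gdw: "good (Suc m) ?w" using gd ik by (auto simp: good_def)
      have thw: "theta m ?w = th'"
        unfolding th'_def by (rule theta_adapted[rule_format]) auto
      have gbw: "gb (Suc m) ?w = gb (Suc m) w"
        by (rule g_adapted[rule_format]) auto
      have ggw: "gg (Suc m) ?w = gg (Suc m) w" by (simp add: gg_def gbw)
      show ?thesis using step[OF gdw, of z] thw tT zT gbw ggw by (simp add: G_def)
    qed
    have "(\<Sum>i<k. f (theta (Suc m) (w(Suc m := i))))
        \<le> (\<Sum>i<k. G - gb (Suc m) w i (blockproj blk i th') + gb (Suc m) w i (blockproj blk i z))"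
      using each by (intro sum_mono) auto
    also have "\<dots> = real k * G - G + gg (Suc m) w z"
      by (simp add: sum.distrib sum_subtractf gg_def G_def)
    also have "\<dots> \<le> real k * f th' - f th' + (f z + L / 2 * (norm (z - th'))\<^sup>2)"
      using surr_eq[OF gd] surr_le[OF gd, of z] by (simp add: G_def th'_def)
    finally have S: "(\<Sum>i<k. f (theta (Suc m) (w(Suc m := i))))
        \<le> real k * f th' - f th' + (f z + L / 2 * (norm (z - th'))\<^sup>2)" .
    have "(\<Sum>i<k. f (theta (Suc m) (w(Suc m := i)))) / real k
        \<le> (real k * f th' - f th' + (f z + L / 2 * (norm (z - th'))\<^sup>2)) / real k"
      using S kpos by (intro divide_right_mono) auto
    also have "\<dots> = (1 - 1 / real k) * f th' + (1 / real k) * (f z + L / 2 * (norm (z - th'))\<^sup>2)"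
      using kpos by (simp add: field_simps)
    finally show ?thesis by (simp add: th'_def)
  qed
  have P_good: "good m w" if "w \<in> P m" for m w using that by (auto simp: P_def good_def PiE_iff)
  have finP: "finite (P m)" for m by (simp add: P_def finite_PiE)
  have cardP: "card (P m) = k ^ m" for m by (simp add: P_def card_PiE)
  have avg_mono: "avg m X \<le> avg m Y" if "\<And>w. w \<in> P m \<Longrightarrow> X w \<le> Y w" for m X Y
    unfolding avg_def using that kpos by (intro divide_right_mono sum_mono) auto
  have avg_aff: "avg m (\<lambda>w. a * X w + b) = a * avg m X + b" for m a b and X :: "(nat \<Rightarrow> nat) \<Rightarrow> real"
    unfolding avg_def using kpos
    by (simp add: sum.distrib sum_distrib_left[symmetric] cardP add_divide_distrib)
  have tower_sum: "(\<Sum>w\<in>P (Suc m). X w) = (\<Sum>w\<in>P m. \<Sum>i<k. X (w(Suc m := i)))" for m X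
  proof -
    have eq: "P (Suc m) = (\<lambda>(y, g). g(Suc m := y)) ` ({..<k} \<times> P m)"
      unfolding P_def by (simp add: atLeastAtMostSuc_conv PiE_insert_eq)
    have inj: "inj_on (\<lambda>(y, g). g(Suc m := y)) ({..<k} \<times> P m)"
    proof (rule inj_onI, clarify)
      fix y g y' g' assume g: "g \<in> P m" "g' \<in> P m" and E: "g(Suc m := y) = g'(Suc m := y')"
      show "y = y' \<and> g = g'"
      proof
        show "y = y'" using fun_cong[OF E, of "Suc m"] by simp
        show "g = g'"
        proof
          fix x show "g x = g' x"
          proof (cases "x = Suc m")
            case True
            then have xn: "x \<notin> {1..m}" by simp
            have "g x = undefined" using g(1) xn unfolding P_def by (rule PiE_arb)
            moreover have "g' x = undefined" using g(2) xn unfolding P_def by (rule PiE_arb)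
            ultimately show ?thesis by simp
          next
            case False then show ?thesis using fun_cong[OF E, of x] by simp
          qed
        qed
      qed
    qed
    have "(\<Sum>w\<in>P (Suc m). X w) = (\<Sum>(y, g)\<in>{..<k} \<times> P m. X (g(Suc m := y)))"
      unfolding eq by (subst sum.reindex[OF inj]) (simp add: case_prod_unfold)
    also have "\<dots> = (\<Sum>y<k. \<Sum>g\<in>P m. X (g(Suc m := y)))"
      by (simp add: sum.cartesian_product)
    also have "\<dots> = (\<Sum>g\<in>P m. \<Sum>y<k. X (g(Suc m := y)))" by (rule sum.swap)
    finally show ?thesis .
  qed
  have tower: "avg (Suc m) X = avg m (\<lambda>w. (\<Sum>i<k. X (w(Suc m := i))) / real k)" for m X
    unfolding avg_def tower_sum using kpos by (simp add: sum_divide_distrib[symmetric] field_simps)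
  have int_eq: "(\<integral>w. f (theta n w) - f ts \<partial>index_space k) = e n" for n
  proof -
    have "(\<integral>w. f (theta n w) - f ts \<partial>index_space k) = (\<Sum>w\<in>P n. f (theta n w) - f ts) / real k ^ card {1..n}"
      unfolding P_def
      by (rule index_space_integral(2)[OF k_pos finite_atLeastAtMost]) (metis theta_adapted)
    then show ?thesis by (simp add: e_def avg_def)
  qed
  have P0: "P 0 = {\<lambda>_. undefined}" by (simp add: P_def)
  have e0: "e 0 = f th0 - f ts" by (simp add: e_def avg_def P0 th0_eq)
  have e_nn: "0 \<le> e n" for n
  proof -
    have "avg n (\<lambda>_. 0) \<le> e n" unfolding e_def
      using inv ts_le P_good by (intro avg_mono) (simp add: diff_ge_0_iff_ge)
    then show ?thesis by (simp add: avg_def)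
  qed
  have e_rec: "e (Suc m) \<le> avg m B" if "\<And>w. good m w \<Longrightarrow>
       (\<Sum>i<k. f (theta (Suc m) (w(Suc m := i)))) / real k - f ts \<le> B w" for m B
  proof -
    have "e (Suc m) = avg m (\<lambda>w. (\<Sum>i<k. f (theta (Suc m) (w(Suc m := i))) - f ts) / real k)"
      unfolding e_def by (rule tower)
    also have "\<dots> \<le> avg m B"
    proof (rule avg_mono)
      fix w assume "w \<in> P m"
      then have "(\<Sum>i<k. f (theta (Suc m) (w(Suc m := i)))) / real k - f ts \<le> B w"
        using that P_good by blast
      then show "(\<Sum>i<k. f (theta (Suc m) (w(Suc m := i))) - f ts) / real k \<le> B w"
        using kpos by (simp add: sum_subtractf diff_divide_distrib)
    qed
    finally show ?thesis .
  qed
  have rho_nn: "0 \<le> 1 - 1 / real k" using k_pos by simp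
  have del_nn: "0 \<le> 1 / real k" by simp
  show ?thesis
  proof (rule conjI, goal_cases)
    case 1
    show ?case
    proof (intro allI impI, goal_cases)
    case (1 R)
    note R = 1(1) and lvl = 1(2)
    have bnd: "norm (theta m w - ts) \<le> R" if "good m w" for m w
      using lvl inv[OF that] by (simp add: Theta_def th0_def)
    have rec: "\<forall>n \<alpha>. 0 \<le> \<alpha> \<longrightarrow> \<alpha> \<le> 1 \<longrightarrow>
       e (Suc n) \<le> e n - (1 / real k) * \<alpha> * e n + (1 / real k) * \<alpha>^2 * (L * R^2) / 2"
    proof (intro allI impI)
      fix n :: nat and \<alpha> :: real assume a0: "0 \<le> \<alpha>" and a1: "\<alpha> \<le> 1"
      define B where "B = (\<lambda>w. (1 - 1 / real k * \<alpha>) * (f (theta n w) - f ts) + (1 / real k) * \<alpha>^2 * (L * R^2) / 2)"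
      have "e (Suc n) \<le> avg n B"
      proof (rule e_rec)
        fix w assume gd: "good n w"
        define th' where "th' = theta n w"
        have tT: "th' \<in> Theta" using inv[OF gd] by (simp add: th'_def)
        define z where "z = (1 - \<alpha>) *\<^sub>R th' + \<alpha> *\<^sub>R ts"
        have zT: "z \<in> Theta" using cvx tT ts_T a0 a1 unfolding z_def by (simp add: convex_def)
        have fz: "f z \<le> (1 - \<alpha>) * f th' + \<alpha> * f ts"
          unfolding z_def by (rule convex_onD[OF f_convex a0 a1]) auto
        have "z - th' = \<alpha> *\<^sub>R (ts - th')" by (simp add: z_def algebra_simps)
        hence "norm (z - th') = \<alpha> * norm (ts - th')" using a0 by simp
        also have "\<dots> \<le> \<alpha> * R" using bnd[OF gd] a0 by (intro mult_left_mono) (simp_all add: th'_def norm_minus_commute)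
        finally have nz: "norm (z - th') \<le> \<alpha> * R" .
        have "(norm (z - th'))\<^sup>2 \<le> (\<alpha> * R)\<^sup>2" using nz by (intro power_mono) auto
        hence q: "L / 2 * (norm (z - th'))\<^sup>2 \<le> L / 2 * (\<alpha> * R)\<^sup>2" using L_pos by simp
        have "(\<Sum>i<k. f (theta (Suc n) (w(Suc n := i)))) / real k
            \<le> (1 - 1 / real k) * f th' + (1 / real k) * (f z + L / 2 * (norm (z - th'))\<^sup>2)"
          using avg_step[OF gd zT] by (simp add: th'_def)
        also have "\<dots> \<le> (1 - 1 / real k) * f th' + (1 / real k) * ((1 - \<alpha>) * f th' + \<alpha> * f ts + L / 2 * (\<alpha> * R)\<^sup>2)"
          using fz q by (intro add_left_mono mult_left_mono) auto
        also have "\<dots> - f ts = B w"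
          by (simp add: B_def th'_def power_mult_distrib algebra_simps)
        finally show "(\<Sum>i<k. f (theta (Suc n) (w(Suc n := i)))) / real k - f ts \<le> B w" by simp
      qed
      also have "avg n B = (1 - 1 / real k * \<alpha>) * e n + (1 / real k) * \<alpha>^2 * (L * R^2) / 2"
        unfolding B_def e_def by (rule avg_aff)
      finally show "e (Suc n) \<le> e n - (1 / real k) * \<alpha> * e n + (1 / real k) * \<alpha>^2 * (L * R^2) / 2"
        by (simp add: algebra_simps)
    qed
    have e0': "e 0 = f (theta 0 (\<lambda>_. 0)) - f ts" using e0 by (simp add: th0_def)
    have e_nn': "\<forall>n. 0 \<le> e n" using e_nn by blast
    note rate = rate_i[OF L_pos R k_pos e0' e_nn' rec]
    define n0 where "n0 = n0_bound k L R (f (theta 0 (\<lambda>_. 0)) - f ts)"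
    have rate': "e n \<le> 2 * L * R\<^sup>2 / (2 + (1 / real k) * (real n - real n0))" if "n0 \<le> n" for n
      using rate that by (simp add: n0_def)
    show ?case
    proof
      show "\<forall>n\<ge>n0_bound k L R (f (theta 0 (\<lambda>_. 0)) - f ts).
          (\<integral>w. f (theta n w) - f ts \<partial>index_space k)
            \<le> 2 * L * R\<^sup>2 / (2 + 1 / real k * (real n - real (n0_bound k L R (f (theta 0 (\<lambda>_. 0)) - f ts))))"
        using rate by (simp add: int_eq)
      show "AE w in index_space k. (\<lambda>n. f (theta n w)) \<longlonglongrightarrow> f ts"
      proof -
        interpret PS: prob_space "index_space k" by (rule prob_space_index[OF k_pos])
        have AE1: "AE w in index_space k. \<forall>j. 1 \<le> j \<longrightarrow> w j < k"
          unfolding AE_all_countable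
        proof
          fix j :: nat
          show "AE w in index_space k. 1 \<le> j \<longrightarrow> w j < k"
          proof (cases "j = 0")
            case True then show ?thesis by simp
          next
            case False
            define S where "S = {w::nat\<Rightarrow>nat. k \<le> w j}"
            have depS: "(\<forall>i\<in>{1..j}. w i = w' i) \<Longrightarrow> (w \<in> S \<longleftrightarrow> w' \<in> S)" for w w'
              using False by (auto simp: S_def)
            note SS = index_space_set[OF k_pos finite_atLeastAtMost depS]
            have "(\<Sum>w\<in>PiE {1..j} (\<lambda>_. {..<k}). indicator S w :: real) = 0"
            proof (intro sum.neutral ballI)
              fix x assume x: "x \<in> PiE {1..j} (\<lambda>_. {..<k})"
              have "j \<in> {1..j}" using False by simp
              hence "x j \<in> {..<k}" by (rule PiE_mem[OF x])
              then show "(indicator S x :: real) = 0" by (simp add: S_def indicator_def)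
            qed
            hence "measure (index_space k) S = 0" using SS(2) by simp
            hence "S \<in> null_sets (index_space k)" using SS(1) by (simp add: PS.emeasure_eq_measure null_sets_def)
            then show ?thesis by (rule AE_I') (auto simp: S_def space_index)
          qed
        qed
        have AE2: "AE w in index_space k. \<forall>m::nat. \<exists>N. f (theta N w) - f ts < 1 / real (Suc m)"
          unfolding AE_all_countable
        proof
          fix m :: nat
          define \<epsilon> where "\<epsilon> = 1 / real (Suc m)"
          have \<epsilon>: "\<epsilon> > 0" by (simp add: \<epsilon>_def)
          define S where "S = (\<lambda>N. {w. \<epsilon> \<le> f (theta N w) - f ts})"
          have depS: "(\<forall>i\<in>{1..N}. w i = w' i) \<Longrightarrow> (w \<in> S N \<longleftrightarrow> w' \<in> S N)" for N w w'
          proof -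
            assume "\<forall>i\<in>{1..N}. w i = w' i"
            hence "theta N w = theta N w'" by (intro theta_adapted[rule_format]) auto
            then show ?thesis by (simp add: S_def)
          qed
          have Ssets: "S N \<in> sets (index_space k)" for N
            by (rule index_space_set(1)[OF k_pos finite_atLeastAtMost depS[of N]])
          have Smeas: "measure (index_space k) (S N) * \<epsilon> \<le> e N" for N
          proof -
            have "measure (index_space k) (S N) = avg N (indicator (S N))"
              using index_space_set(2)[OF k_pos finite_atLeastAtMost depS[of N]] by (simp add: avg_def P_def)
            also have "\<dots> \<le> avg N (\<lambda>w. (1 / \<epsilon>) * (f (theta N w) - f ts) + 0)"
            proof (rule avg_mono)
              fix w assume "w \<in> P N"
              then have "0 \<le> f (theta N w) - f ts" using inv ts_le P_good by simp
              then show "indicator (S N) w \<le> (1 / \<epsilon>) * (f (theta N w) - f ts) + 0"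
                using \<epsilon> by (auto simp: S_def indicator_def field_simps)
            qed
            also have "\<dots> = (1 / \<epsilon>) * e N + 0" unfolding e_def by (rule avg_aff)
            finally show ?thesis using \<epsilon> by (simp add: field_simps)
          qed
          define T where "T = (\<Inter>N. S N)"
          have Tsets: "T \<in> sets (index_space k)" unfolding T_def using Ssets by auto
          have T0: "measure (index_space k) T = 0"
          proof (rule ccontr)
            assume "measure (index_space k) T \<noteq> 0"
            hence mpos: "measure (index_space k) T > 0" using measure_nonneg[of "index_space k" T] by linarith
            define \<eta> where "\<eta> = \<epsilon> * measure (index_space k) T"
            have \<eta>: "\<eta> > 0" using \<epsilon> mpos by (simp add: \<eta>_def)
            define c where "c = L * R\<^sup>2"
            have c: "c > 0" using L_pos R by (simp add: c_def)
            have kr: "real k > 0" using kpos .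
            define j where "j = nat \<lceil>2 * c * real k / \<eta>\<rceil>"
            have "2 * c * real k / \<eta> \<le> real j" unfolding j_def by (rule real_nat_ceiling_ge)
            hence "2 * c * real k \<le> real j * \<eta>" using \<eta> by (simp add: field_simps)
            moreover have "0 < \<eta> * (real k * 2)" using \<eta> kr by simp
            ultimately have "2 * c * real k < \<eta> * real j + \<eta> * (real k * 2)" by (simp add: mult.commute)
            hence "2 * c < \<eta> * (2 + 1 / real k * real j)" using \<eta> kr by (simp add: field_simps)
            hence lt: "2 * c / (2 + 1 / real k * real j) < \<eta>"
              using \<eta> by (simp add: field_simps add_pos_nonneg)
            have "\<eta> \<le> measure (index_space k) (S (n0 + j)) * \<epsilon>"
              unfolding \<eta>_def using \<epsilon>
              by (simp add: mult.commute[of \<epsilon>] T_def PS.finite_measure_mono[OF _ Ssets] INF_lower)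
            also have "\<dots> \<le> e (n0 + j)" by (rule Smeas)
            also have "\<dots> \<le> 2 * c / (2 + 1 / real k * real j)" using rate'[of "n0 + j"] by (simp add: c_def)
            finally show False using lt by simp
          qed
          have "T \<in> null_sets (index_space k)" using Tsets T0 by (simp add: PS.emeasure_eq_measure null_sets_def)
          then show "AE w in index_space k. \<exists>N. f (theta N w) - f ts < 1 / real (Suc m)"
            by (rule AE_I') (auto simp: T_def S_def \<epsilon>_def space_index not_less)
        qed
        show ?thesis using AE1 AE2
        proof eventually_elim
          case (elim w)
          have gd: "good n w" for n using elim(1) by (auto simp: good_def)
          have dec: "decseq (\<lambda>n. f (theta n w))" by (rule decseq_SucI) (rule mono[OF gd])
          show "(\<lambda>n. f (theta n w)) \<longlonglongrightarrow> f ts"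
          proof (rule LIMSEQ_I)
            fix r :: real assume r: "0 < r"
            obtain m where m: "inverse (real (Suc m)) < r" using reals_Archimedean[OF r] by blast
            obtain N where N: "f (theta N w) - f ts < 1 / real (Suc m)" using elim(2) by blast
            show "\<exists>no. \<forall>n\<ge>no. norm (f (theta n w) - f ts) < r"
            proof (intro exI allI impI)
              fix n assume "N \<le> n"
              hence "f (theta n w) \<le> f (theta N w)" using dec by (rule decseqD[rotated])
              moreover have "f ts \<le> f (theta n w)" using inv[OF gd] ts_le by blast
              ultimately show "norm (f (theta n w) - f ts) < r" using N m by (simp add: inverse_eq_divide)
            qed
          qed
        qed
      qed
    qed
    qed
  next
    case 2
    show ?case
    proof (intro allI impI, goal_cases)
    case (1 mu n)
    note mu = 1(1) and sc = 1(2) and n1 = 1(3)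
    define \<beta> where "\<beta> = (if mu > 2 * L then L / mu else 1 - mu / (4 * L))"
    define \<rho> where "\<rho> = (1 - 1 / real k) + (1 / real k) * \<beta>"
    have beta_nn: "0 \<le> \<beta>" using mu L_pos by (auto simp: \<beta>_def field_simps)
    have rho_nn': "0 \<le> \<rho>" using rho_nn beta_nn by (simp add: \<rho>_def)
    have zb: "\<exists>z\<in>Theta. f z + L / 2 * (norm (z - th'))\<^sup>2 - f ts \<le> \<beta> * (f th' - f ts)"
      if tT: "th' \<in> Theta" for th'
    proof -
      have sg: "mu / 2 * (norm (th' - ts))\<^sup>2 \<le> f th' - f ts"
        by (rule strong_gap[OF sc cvx ts_T _ tT]) (use ts_le in blast)
      have nc: "norm (th' - ts) = norm (ts - th')" by (rule norm_minus_commute)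
      show ?thesis
      proof (cases "mu > 2 * L")
        case True
        have "L / 2 * (norm (ts - th'))\<^sup>2 = (L / mu) * (mu / 2 * (norm (th' - ts))\<^sup>2)"
          using mu nc by (simp add: field_simps)
        also have "\<dots> \<le> (L / mu) * (f th' - f ts)" using sg L_pos mu by (intro mult_left_mono) auto
        finally show ?thesis using True ts_T by (intro bexI[of _ ts]) (simp_all add: \<beta>_def)
      next
        case False
        define a where "a = mu / (4 * L)"
        have a0: "0 \<le> a" "a \<le> 1" using False mu L_pos by (auto simp: a_def field_simps)
        define z where "z = a *\<^sub>R ts + (1 - a) *\<^sub>R th'"
        have zT: "z \<in> Theta" using cvx tT ts_T a0 unfolding z_def by (simp add: convex_def)
        have fz: "f z \<le> a * f ts + (1 - a) * f th' - mu / 2 * a * (1 - a) * (norm (ts - th'))\<^sup>2"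
          using sc a0 unfolding strongly_convex_on_def z_def by blast
        have "z - th' = a *\<^sub>R (ts - th')" by (simp add: z_def algebra_simps)
        hence nz: "norm (z - th') = a * norm (ts - th')" using a0 by simp
        have coef: "L * a^2 / 2 - mu / 2 * a * (1 - a) \<le> 0"
        proof -
          have "mu * (mu / (4 * L)) \<le> mu * (1 / 2)" using False mu L_pos by (intro mult_left_mono) (auto simp: field_simps)
          hence "L * a - mu + mu * a \<le> 0" using L_pos mu by (simp add: a_def field_simps)
          hence "a / 2 * (L * a - mu + mu * a) \<le> 0" using a0 by (simp add: mult_nonneg_nonpos)
          thus ?thesis by (simp add: power2_eq_square algebra_simps)
        qed
        have "f z + L / 2 * (norm (z - th'))\<^sup>2 - f ts
            \<le> (1 - a) * (f th' - f ts) + (L * a^2 / 2 - mu / 2 * a * (1 - a)) * (norm (ts - th'))\<^sup>2"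
          using fz nz by (simp add: power_mult_distrib algebra_simps)
        also have "\<dots> \<le> (1 - a) * (f th' - f ts)"
          using coef by (simp add: mult_nonpos_nonneg)
        finally show ?thesis using False zT by (intro bexI[of _ z]) (simp_all add: \<beta>_def a_def)
      qed
    qed
    have recII: "\<forall>m. e (Suc m) \<le> \<rho> * e m"
    proof
      fix m :: nat
      have "e (Suc m) \<le> avg m (\<lambda>w. \<rho> * (f (theta m w) - f ts) + 0)"
      proof (rule e_rec)
        fix w assume gd: "good m w"
        define th' where "th' = theta m w"
        have tT: "th' \<in> Theta" using inv[OF gd] by (simp add: th'_def)
        obtain z where zT: "z \<in> Theta" and zz: "f z + L / 2 * (norm (z - th'))\<^sup>2 - f ts \<le> \<beta> * (f th' - f ts)"
          using zb[OF tT] by blast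
        have "(\<Sum>i<k. f (theta (Suc m) (w(Suc m := i)))) / real k - f ts
            \<le> (1 - 1 / real k) * f th' + (1 / real k) * (f z + L / 2 * (norm (z - th'))\<^sup>2) - f ts"
          using avg_step[OF gd zT] by (simp add: th'_def)
        also have "\<dots> = (1 - 1 / real k) * (f th' - f ts) + (1 / real k) * (f z + L / 2 * (norm (z - th'))\<^sup>2 - f ts)"
          by (simp add: algebra_simps)
        also have "\<dots> \<le> (1 - 1 / real k) * (f th' - f ts) + (1 / real k) * (\<beta> * (f th' - f ts))"
          using zz by (intro add_left_mono mult_left_mono) auto
        also have "\<dots> = \<rho> * (f (theta m w) - f ts) + 0" by (simp add: \<rho>_def th'_def algebra_simps)
        finally show "(\<Sum>i<k. f (theta (Suc m) (w(Suc m := i)))) / real k - f ts \<le> \<rho> * (f (theta m w) - f ts) + 0" .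
      qed
      also have "\<dots> = \<rho> * e m + 0" unfolding e_def by (rule avg_aff)
      finally show "e (Suc m) \<le> \<rho> * e m" by simp
    qed
    have "e n \<le> \<rho> ^ n * e 0" by (rule geom_rate[OF recII rho_nn'])
    then show ?case by (simp add: int_eq e0 th0_def \<rho>_def \<beta>_def)
  qed
  qed
qed

end
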